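(* Let $k\ge2$ be an integer, let $H=(V,\mathcal E)$ be a hypergraph with $n$ vertices that is hereditarily $k$-colorable, and set $\lambda:=\frac{k}{k-1}$. Let $\mathcal L=\{L_v\}_{v\in V}$ be a family of sets of positive integers with $|L_v|>\log_\lambda n$ for every $v\in V$. Then $H$ admits a unique-maximum coloring from $\mathcal L$.
   Context: A hypergraph $H=(V,\mathcal E)$ has finite vertex set $V$ and nonempty hyperedges. A coloring $C\colon V\to\mathbb Z_{>0}$ is proper if every hyperedge with at least two vertices is non-monochromatic; it is unique-maximum if in every hyperedge $S$ the color $\max_{v\in S}C(v)$ is attained by exactly one vertex of $S$. For $V'\subseteq V$, $H[V']=(V',\{S\cap V': S\in\mathcal E\})$. $H$ is hereditarily $k$-colorable if every $H[V']$ admits a proper coloring with at most $k$ colors. $H$ admits a coloring from $\mathcal L$ if $C(v)\in L_v$ for all $v$. *)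

theory Defs
  imports Complex_Main
begin

definition hypergraph :: "'a set \<Rightarrow> 'a set set \<Rightarrow> bool" where
  "hypergraph V E \<longleftrightarrow> finite V \<and> (\<forall>S\<in>E. S \<noteq> {} \<and> S \<subseteq> V)"

definition induced_edges :: "'a set set \<Rightarrow> 'a set \<Rightarrow> 'a set set" where
  "induced_edges E V' = {S \<inter> V' | S. S \<in> E}"

definition proper_coloring :: "'a set \<Rightarrow> 'a set set \<Rightarrow> ('a \<Rightarrow> nat) \<Rightarrow> bool" where
  "proper_coloring V E C \<longleftrightarrow> (\<forall>v\<in>V. C v > 0) \<and>
     (\<forall>S\<in>E. card S \<ge> 2 \<longrightarrow> (\<exists>u\<in>S. \<exists>w\<in>S. C u \<noteq> C w))"

definition unique_max_coloring :: "'a set \<Rightarrow> 'a set set \<Rightarrow> ('a \<Rightarrow> nat) \<Rightarrow> bool" where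
  "unique_max_coloring V E C \<longleftrightarrow> (\<forall>v\<in>V. C v > 0) \<and>
     (\<forall>S\<in>E. S \<noteq> {} \<longrightarrow> card {v\<in>S. C v = Max (C ` S)} = 1)"

definition hereditarily_colorable :: "nat \<Rightarrow> 'a set \<Rightarrow> 'a set set \<Rightarrow> bool" where
  "hereditarily_colorable k V E \<longleftrightarrow>
     (\<forall>V'\<subseteq>V. \<exists>C. proper_coloring V' (induced_edges E V') C \<and> card (C ` V') \<le> k)"

end

theory Submission
  imports Defs
begin

definition wt :: "nat \<Rightarrow> nat set \<Rightarrow> real" where
  "wt k A = (if finite A then ((real k - 1) / real k) ^ card A else 0)"

lemma wt_nonneg: "k \<ge> 2 \<Longrightarrow> wt k A \<ge> 0"
  unfolding wt_def by auto

lemma wt_empty: "wt k {} = 1"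
  unfolding wt_def by simp

lemma wt_remove:
  assumes "k \<ge> 2" "c \<in> A"
  shows "wt k A = ((real k - 1) / real k) * wt k (A - {c})"
proof (cases "finite A")
  case True
  then have "card A = Suc (card (A - {c}))"
    using assms(2) by (metis card_Suc_Diff1)
  then show ?thesis using True unfolding wt_def by simp
next
  case False
  then have "infinite (A - {c})" by simp
  then show ?thesis using False unfolding wt_def by simp
qed

lemma main:
  fixes k :: nat and V :: "'a set" and E :: "'a set set"
  assumes k2: "k \<ge> 2" and hg: "hypergraph V E" and hc: "hereditarily_colorable k V E"
  shows "W \<subseteq> V \<Longrightarrow> (\<forall>v\<in>W. \<forall>c\<in>L v. c > 0) \<Longrightarrow> (\<Sum>v\<in>W. wt k (L v)) < 1 \<Longrightarrow>
    \<exists>C. (\<forall>v\<in>W. C v \<in> L v) \<and>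
      (\<forall>S\<in>E. S \<inter> W \<noteq> {} \<longrightarrow> card {v\<in>S\<inter>W. C v = Max (C ` (S\<inter>W))} = 1)"
proof (induction "card W" arbitrary: W L rule: less_induct)
  case less
  have finV: "finite V" using hg unfolding hypergraph_def by auto
  have finW: "finite W" using less.prems(1) finV finite_subset by auto
  show ?case
  proof (cases "W = {}")
    case True
    then show ?thesis by auto
  next
    case Wne: False
    define r :: real where "r = (real k - 1) / real k"
    have r0: "r > 0" using k2 unfolding r_def by auto
    have wlt: "wt k (L v) < 1" if "v \<in> W" for v
    proof -
      have "wt k (L v) \<le> (\<Sum>v\<in>W. wt k (L v))"
        using member_le_sum[of v W "\<lambda>v. wt k (L v)"] that finW wt_nonneg[OF k2] by auto
      then show ?thesis using less.prems(3) by linarith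
    qed
    have Lne: "L v \<noteq> {}" if "v \<in> W" for v using wlt[OF that] wt_empty by force
    define U where "U = (\<Union>v\<in>W. L v)"
    have "U \<noteq> {}" using Wne Lne unfolding U_def by auto
    then obtain x0 where "x0 \<in> U" by auto
    define c where "c = (LEAST x. x \<in> U)"
    have cU: "c \<in> U" unfolding c_def using \<open>x0 \<in> U\<close> by (rule LeastI)
    have cle: "c \<le> x" if "v \<in> W" "x \<in> L v" for v x
      unfolding c_def using that U_def by (auto intro: Least_le)
    define Vc where "Vc = {v\<in>W. c \<in> L v}"
    have Vcne: "Vc \<noteq> {}" using cU unfolding Vc_def U_def by auto
    have VcW: "Vc \<subseteq> W" unfolding Vc_def by auto
    have finVc: "finite Vc" using VcW finW finite_subset by auto
    obtain P where P: "proper_coloring Vc (induced_edges E Vc) P" "card (P ` Vc) \<le> k"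
      using hc VcW less.prems(1) unfolding hereditarily_colorable_def by (meson order_trans)
    define J where "J = P ` Vc"
    define f where "f j = (\<Sum>v\<in>{v\<in>Vc. P v = j}. wt k (L v))" for j
    have finJ: "finite J" "J \<noteq> {}" using finVc Vcne unfolding J_def by auto
    define m where "m = Max (f ` J)"
    have "m \<in> f ` J" unfolding m_def using finJ by auto
    then obtain j0 where j0: "j0 \<in> J" "f j0 = m" by auto
    have fle: "f j \<le> f j0" if "j \<in> J" for j using j0 that finJ unfolding m_def by auto
    define Wc where "Wc = (\<Sum>v\<in>Vc. wt k (L v))"
    have "Wc = (\<Sum>j\<in>J. f j)" unfolding Wc_def J_def f_def
      using sum.image_gen[OF finVc, of "\<lambda>v. wt k (L v)" P] by simp
    also have "\<dots> \<le> of_nat (card J) * f j0" by (rule sum_bounded_above) (rule fle)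
    also have "\<dots> \<le> real k * f j0"
    proof (rule mult_right_mono)
      show "real (card J) \<le> real k" using P(2) unfolding J_def by simp
      show "0 \<le> f j0" unfolding f_def using wt_nonneg[OF k2] by (simp add: sum_nonneg)
    qed
    finally have Wcle: "Wc \<le> real k * f j0" .
    define X where "X = {v\<in>Vc. P v = j0}"
    have XVc: "X \<subseteq> Vc" unfolding X_def by auto
    have Xne: "X \<noteq> {}" using j0(1) unfolding X_def J_def by auto
    define W' where "W' = W - X"
    define L' where "L' v = L v - {c}" for v
    have cardlt: "card W' < card W"
    proof -
      have "W' \<subset> W" unfolding W'_def using Xne XVc VcW by auto
      then show ?thesis using finW by (rule psubset_card_mono[rotated])
    qed
    have W'sub: "W' \<subseteq> V" using less.prems(1) unfolding W'_def by auto
    have pos': "\<forall>v\<in>W'. \<forall>x\<in>L' v. x > 0" using less.prems(2) unfolding W'_def L'_def by auto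
    have W'split: "W' = (W - Vc) \<union> (Vc - X)" "(W - Vc) \<inter> (Vc - X) = {}"
      unfolding W'_def using XVc VcW by auto
    have s1: "(\<Sum>v\<in>W'. wt k (L' v)) = (\<Sum>v\<in>W-Vc. wt k (L' v)) + (\<Sum>v\<in>Vc-X. wt k (L' v))"
      unfolding W'split(1) using W'split(2) finW finVc by (intro sum.union_disjoint) auto
    have s2: "(\<Sum>v\<in>W-Vc. wt k (L' v)) = (\<Sum>v\<in>W-Vc. wt k (L v))"
      unfolding L'_def Vc_def by (intro sum.cong) auto
    have s3: "(\<Sum>v\<in>Vc-X. wt k (L v)) = r * (\<Sum>v\<in>Vc-X. wt k (L' v))"
      unfolding sum_distrib_left L'_def r_def
      by (intro sum.cong refl wt_remove[OF k2]) (auto simp: Vc_def)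
    have s4: "Wc = (\<Sum>v\<in>Vc-X. wt k (L v)) + f j0"
      unfolding Wc_def f_def X_def[symmetric]
      using sum.subset_diff[OF XVc finVc, of "\<lambda>v. wt k (L v)"] by simp
    have s5: "(\<Sum>v\<in>W. wt k (L v)) = (\<Sum>v\<in>W-Vc. wt k (L v)) + Wc"
      unfolding Wc_def using sum.subset_diff[OF VcW finW, of "\<lambda>v. wt k (L v)"] by simp
    have kpos: "real k > 1" using k2 by simp
    have key: "(\<Sum>v\<in>Vc-X. wt k (L' v)) \<le> Wc"
    proof -
      have "r * (\<Sum>v\<in>Vc-X. wt k (L' v)) = Wc - f j0" using s3 s4 by simp
      also have "\<dots> \<le> Wc - Wc / real k" using Wcle kpos by (simp add: field_simps)
      also have "\<dots> = r * Wc" unfolding r_def using kpos by (simp add: field_simps)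
      finally show ?thesis using r0 by simp
    qed
    have sum': "(\<Sum>v\<in>W'. wt k (L' v)) < 1"
      using s1 s2 s5 key less.prems(3) by linarith
    obtain C' where C': "\<forall>v\<in>W'. C' v \<in> L' v"
      "\<forall>S\<in>E. S \<inter> W' \<noteq> {} \<longrightarrow> card {v\<in>S\<inter>W'. C' v = Max (C' ` (S\<inter>W'))} = 1"
      using less.hyps[OF cardlt W'sub pos' sum'] by blast
    define C where "C v = (if v \<in> X then c else C' v)" for v
    have Cgt: "C' v > c" "C' v \<in> L v" if "v \<in> W'" for v
    proof -
      have "C' v \<in> L v" "C' v \<noteq> c" using C'(1) that unfolding L'_def by auto
      moreover have "c \<le> C' v" using cle[OF _ \<open>C' v \<in> L v\<close>] that unfolding W'_def by auto
      ultimately show "C' v > c" "C' v \<in> L v" by auto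
    qed
    have CL: "\<forall>v\<in>W. C v \<in> L v"
      using Cgt(2) XVc unfolding C_def W'_def Vc_def by auto
    have CU: "card {v\<in>S\<inter>W. C v = Max (C ` (S\<inter>W))} = 1" if S: "S \<in> E" "S \<inter> W \<noteq> {}" for S
    proof (cases "S \<inter> W' = {}")
      case False
      define B where "B = S \<inter> W'"
      have finB: "finite B" using finW unfolding B_def W'_def by auto
      define M where "M = Max (C' ` B)"
      have MB: "M \<in> C' ` B" unfolding M_def using finB False B_def by auto
      have Mc: "M > c" using MB Cgt(1) unfolding B_def by auto
      have Mge: "C' v \<le> M" if "v \<in> B" for v unfolding M_def using finB that by auto
      have MaxA: "Max (C ` (S\<inter>W)) = M"
      proof (rule Max_eqI)
        show "finite (C ` (S \<inter> W))" using finW by auto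
        show "y \<le> M" if yin: "y \<in> C ` (S \<inter> W)" for y
        proof -
          obtain v where v: "v \<in> S \<inter> W" "y = C v" using yin by auto
          show ?thesis
          proof (cases "v \<in> X")
            case True then show ?thesis using v Mc unfolding C_def by simp
          next
            case False then have "v \<in> B" using v unfolding B_def W'_def by auto
            then show ?thesis using v Mge False unfolding C_def by simp
          qed
        qed
        show "M \<in> C ` (S \<inter> W)" using MB unfolding C_def B_def W'_def by auto
      qed
      have "{v\<in>S\<inter>W. C v = Max (C ` (S\<inter>W))} = {v\<in>S\<inter>W'. C' v = Max (C' ` (S\<inter>W'))}"
        unfolding MaxA M_def[symmetric] B_def[symmetric] using Mc
        unfolding C_def B_def W'_def by auto
      then show ?thesis using C'(2) S(1) False by simp
    next
      case True
      have sub: "S \<inter> W \<subseteq> X" using True unfolding W'_def by auto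
      have eqVc: "S \<inter> Vc = S \<inter> W" using sub XVc VcW by auto
      have "\<not> card (S \<inter> W) \<ge> 2"
      proof
        assume c2: "card (S \<inter> W) \<ge> 2"
        have "S \<inter> Vc \<in> induced_edges E Vc" unfolding induced_edges_def using S(1) by auto
        then obtain u w where "u \<in> S \<inter> Vc" "w \<in> S \<inter> Vc" "P u \<noteq> P w"
          using P(1) c2 eqVc unfolding proper_coloring_def by metis
        then show False using sub eqVc unfolding X_def by auto
      qed
      moreover have "card (S \<inter> W) \<noteq> 0" using S(2) finW by auto
      ultimately have "card (S \<inter> W) = 1" by linarith
      then obtain x where x: "S \<inter> W = {x}" by (auto simp: card_Suc_eq)
      then have "{v\<in>S\<inter>W. C v = Max (C ` (S\<inter>W))} = {x}" by auto
      then show ?thesis by simp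
    qed
    show ?thesis using CL CU by blast
  qed
qed

theorem theorem3p1:
  fixes k :: nat and V :: "'a set" and E :: "'a set set" and L :: "'a \<Rightarrow> nat set"
  assumes "k \<ge> 2"
    and "hypergraph V E"
    and "hereditarily_colorable k V E"
    and "\<forall>v\<in>V. (\<forall>c\<in>L v. c > 0)"
    and "\<forall>v\<in>V. infinite (L v) \<or> real (card (L v)) > log (real k / (real k - 1)) (real (card V))"
  shows "\<exists>C. unique_max_coloring V E C \<and> (\<forall>v\<in>V. C v \<in> L v)"
proof -
  have finV: "finite V" using assms(2) unfolding hypergraph_def by auto
  define lam :: real where "lam = real k / (real k - 1)"
  have lam1: "lam > 1" using assms(1) unfolding lam_def by (simp add: field_simps)
  have sumlt: "(\<Sum>v\<in>V. wt k (L v)) < 1"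
  proof (cases "V = {}")
    case True then show ?thesis by simp
  next
    case False
    define n where "n = card V"
    have npos: "real n > 0" using False finV unfolding n_def by auto
    have each: "wt k (L v) < 1 / real n" if "v \<in> V" for v
    proof (cases "finite (L v)")
      case False then show ?thesis unfolding wt_def using npos by simp
    next
      case True
      define m where "m = card (L v)"
      have "log lam (real n) < real m"
        using assms(5) that True unfolding m_def lam_def n_def by auto
      then have "real n < lam ^ m"
        using log_less_iff[OF lam1 npos] powr_realpow lam1 by auto
      moreover have "(real k - 1) / real k = 1 / lam" unfolding lam_def by simp
      ultimately have "((real k - 1) / real k) ^ m < 1 / real n"
      proof -
        assume a: "real n < lam ^ m" "(real k - 1) / real k = 1 / lam"
        have "((real k - 1) / real k) ^ m = 1 / lam ^ m" using a(2) by (simp add: power_one_over)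
        also have "\<dots> < 1 / real n" using a(1) npos by (simp add: frac_less2)
        finally show ?thesis .
      qed
      then show ?thesis unfolding wt_def m_def using True by simp
    qed
    have "(\<Sum>v\<in>V. wt k (L v)) < of_nat (card V) * (1 / real n)"
      using sum_bounded_above_strict[of V "\<lambda>v. wt k (L v)" "1 / real n"] each False finV
      by (simp add: card_gt_0_iff)
    then show ?thesis using npos unfolding n_def by simp
  qed
  obtain C where C: "\<forall>v\<in>V. C v \<in> L v"
    "\<forall>S\<in>E. S \<inter> V \<noteq> {} \<longrightarrow> card {v\<in>S\<inter>V. C v = Max (C ` (S\<inter>V))} = 1"
    using main[OF assms(1-3) subset_refl assms(4) sumlt] by blast
  have "unique_max_coloring V E C"
    unfolding unique_max_coloring_def
  proof (intro conjI ballI impI)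
    fix v assume "v \<in> V" then show "C v > 0" using C(1) assms(4) by auto
  next
    fix S assume "S \<in> E" "S \<noteq> {}"
    moreover have "S \<inter> V = S" using \<open>S \<in> E\<close> assms(2) unfolding hypergraph_def by auto
    ultimately show "card {v\<in>S. C v = Max (C ` S)} = 1" using C(2) by (metis Int_def)
  qed
  then show ?thesis using C(1) by blast
qed

end
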